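(* Let $p$ be a prime number and let $n$ be a positive integer. Then $S_n(n)\equiv p \pmod{n}$ (i.e. $n\in\mathcal{M}_p$) if and only if all of the following hold: (i) the prime power factorization of $n$ has the form $n=p^s q_1\cdots q_r$, where $0\le s\le 2$ and $q_1,\dots,q_r$ are pairwise distinct primes different from $p$ (each appearing with exponent $1$); (ii) for every $i\in\{1,\dots,r\}$, $q_i-1$ divides $n$ and $n/q_i+p\equiv 0\pmod{q_i}$; (iii) if $s=1$, then $p-1\nmid n$; (iv) if $s=2$, then $p-1\mid n$ and $n/p^2+1\equiv 0\pmod{p}$.
   Context: For positive integers $k,n$ let $S_k(n)=\sum_{i=1}^{n} i^k$. For an integer $a$, $\mathcal{M}_a$ denotes the set of positive integers $n$ such that $S_n(n)\equiv a\pmod{n}$. *)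

theory Defs
  imports "HOL-Computational_Algebra.Primes" "HOL-Number_Theory.Cong"
begin

definition S :: "nat \<Rightarrow> nat \<Rightarrow> nat" where
  "S k n = (\<Sum>i=1..n. i ^ k)"

definition M :: "int \<Rightarrow> nat set" where
  "M a = {n. n > 0 \<and> [int (S n n) = a] (mod int n)}"

end

theory Submission imports Defs "HOL-Number_Theory.Number_Theory" begin

lemma S_split: "S k (a + b) = S k a + (\<Sum>i=1..b. (a+i)^k)"
proof (induction b)
  case 0 then show ?case by simp
next
  case (Suc b)
  have "S k (a + Suc b) = S k (a+b) + (a + Suc b)^k"
    by (simp add: S_def)
  then show ?case using Suc by simp
qed

lemma S_block:
  assumes "\<And>t i. [(m*t+i)^k = i^k] (mod N)"
  shows "[S k (m*t) = t * S k m] (mod N)"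
proof (induction t)
  case 0 then show ?case by (simp add: S_def)
next
  case (Suc t)
  have "S k (m * Suc t) = S k (m*t) + (\<Sum>i=1..m. (m*t+i)^k)"
    using S_split[of k "m*t" m] by (simp add: add.commute)
  moreover have "[(\<Sum>i=1..m. (m*t+i)^k) = (\<Sum>i=1..m. i^k)] (mod N)"
    by (rule cong_sum) (rule assms)
  ultimately have "[S k (m * Suc t) = t * S k m + (\<Sum>i=1..m. i^k)] (mod N)"
    using Suc cong_add by metis
  then show ?case by (simp add: S_def add.commute)
qed

lemma S_block_mod:
  "[S k (m*t) = t * S k m] (mod m)"
proof (rule S_block)
  fix t i
  have "[m*t+i = i] (mod m)" by (simp add: cong_def)
  then show "[(m*t+i)^k = i^k] (mod m)" by (rule cong_pow)
qed

lemma lift_p: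
  fixes p t i :: nat
  assumes "prime p"
  shows "[(p*t+i)^p = i^p] (mod p^2)"
proof -
  have "(p*t+i)^p = (\<Sum>j\<le>p. (p choose j) * (p*t)^j * i^(p-j))"
    by (simp add: binomial)
  also have "\<dots> = i^p + (\<Sum>j\<in>{1..p}. (p choose j) * (p*t)^j * i^(p-j))"
  proof -
    have "{..p} = insert 0 {1..p}" by auto
    then show ?thesis by simp
  qed
  finally have e: "(p*t+i)^p = i^p + (\<Sum>j\<in>{1..p}. (p choose j) * (p*t)^j * i^(p-j))" .
  have "p^2 dvd (\<Sum>j\<in>{1..p}. (p choose j) * (p*t)^j * i^(p-j))"
  proof (rule dvd_sum)
    fix j assume j: "j \<in> {1..p}"
    show "p^2 dvd (p choose j) * (p*t)^j * i^(p-j)"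
    proof (cases "j = 1")
      case True then show ?thesis by (simp add: power2_eq_square)
    next
      case False
      then have "j \<ge> 2" using j by auto
      then have "p^2 dvd p^j" by (simp add: le_imp_power_dvd)
      then have "p^2 dvd (p*t)^j" by (simp add: power_mult_distrib)
      then show ?thesis by simp
    qed
  qed
  then show ?thesis using e by (auto simp: cong_def elim!: dvdE)
qed

lemma lift_k:
  fixes p t i k :: nat
  assumes "prime p" "p dvd k"
  shows "[(p*t+i)^k = i^k] (mod p^2)"
proof -
  obtain c where k: "k = p * c" using assms(2) by blast
  have "[((p*t+i)^p)^c = (i^p)^c] (mod p^2)"
    by (rule cong_pow) (rule lift_p[OF assms(1)])
  then show ?thesis by (simp add: k power_mult)
qed

lemma S_prime_dvd:
  fixes q k :: nat
  assumes q: "prime q" and k: "(q-1) dvd k"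
  shows "[(\<Sum>i=1..q-1. i^k) = q - 1] (mod q)"
proof -
  obtain c where c: "k = (q-1)*c" using k by blast
  have "[(\<Sum>i=1..q-1. i^k) = (\<Sum>i=1..q-1. 1)] (mod q)"
  proof (rule cong_sum)
    fix i assume i: "i \<in> {1..q-1}"
    then have "\<not> q dvd i" by (auto dest: dvd_imp_le)
    then have "[i^(q-1) = 1] (mod q)" using fermat_theorem[OF q] by blast
    then have "[(i^(q-1))^c = 1^c] (mod q)" by (rule cong_pow)
    then show "[i^k = 1] (mod q)" by (simp add: c power_mult)
  qed
  then show ?thesis by simp
qed

lemma S_prime_ndvd:
  fixes q k :: nat
  assumes q: "prime q" and k: "\<not> (q-1) dvd k"
  shows "[(\<Sum>i=1..q-1. i^k) = 0] (mod q)"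
proof -
  have q1: "q > 1" using q prime_gt_1_nat by blast
  obtain g where g: "residue_primroot q g" using prime_primitive_root_exists[OF q1 q] by blast
  have cg: "coprime q g" and og: "ord q g = q - 1"
    using g by (auto simp: residue_primroot_def totient_prime[OF q])
  have ng: "\<not> [g^k = 1] (mod q)" using og k ord_divides by metis
  define U where "U = {1..q-1}"
  define A where "A = (\<Sum>i\<in>U. i^k)"
  define h where "h i = (g*i) mod q" for i
  have hU: "h ` U \<subseteq> U"
  proof
    fix x assume "x \<in> h ` U"
    then obtain i where i: "i \<in> U" "x = h i" by blast
    have "\<not> q dvd i" using i by (auto simp: U_def dest: dvd_imp_le)
    moreover have "\<not> q dvd g" using cg q
      by (metis coprime_absorb_left not_prime_unit) 
    ultimately have "\<not> q dvd g*i" using q prime_dvd_mult_iff by blast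
    then have "x \<noteq> 0" using i by (simp add: h_def mod_eq_0_iff_dvd)
    moreover have "x < q" using i q1 by (simp add: h_def)
    ultimately show "x \<in> U" by (simp add: U_def)
  qed
  have "inj_on h U"
  proof
    fix i j assume ij: "i \<in> U" "j \<in> U" "h i = h j"
    then have "[i*g = j*g] (mod q)" by (simp add: h_def cong_def mult.commute)
    then have "[i = j] (mod q)" using cg cong_mult_rcancel_nat coprime_commute by blast
    then show "i = j" using ij(1,2) by (auto simp: U_def cong_def)
  qed
  then have hb: "h ` U = U" using hU by (simp add: U_def endo_inj_surj)
  have "A = (\<Sum>i\<in>h ` U. i^k)" using hb by (simp add: A_def)
  also have "\<dots> = (\<Sum>i\<in>U. (h i)^k)" using \<open>inj_on h U\<close> by (simp add: sum.reindex)
  finally have A1: "A = (\<Sum>i\<in>U. (h i)^k)" .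
  have "[(\<Sum>i\<in>U. (h i)^k) = (\<Sum>i\<in>U. g^k * i^k)] (mod q)"
  proof (rule cong_sum)
    fix i
    have "[h i = g*i] (mod q)" by (simp add: h_def cong_def)
    then have "[(h i)^k = (g*i)^k] (mod q)" by (rule cong_pow)
    then show "[(h i)^k = g^k * i^k] (mod q)" by (simp add: power_mult_distrib)
  qed
  moreover have "(\<Sum>i\<in>U. g^k * i^k) = A * g^k"
    by (simp add: A_def sum_distrib_right mult.commute[of "g^k"])
  ultimately have "[A * 1 = A * g^k] (mod q)" using A1 by simp
  show ?thesis
  proof (rule ccontr)
    assume "\<not> [(\<Sum>i=1..q-1. i^k) = 0] (mod q)"
    then have "\<not> q dvd A" by (simp add: A_def U_def cong_0_iff)
    then have "coprime A q" using q by (metis prime_imp_coprime coprime_commute)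
    then have "[1 = g^k] (mod q)" using \<open>[A * 1 = A * g^k] (mod q)\<close>
      by (metis cong_mult_rcancel_nat mult.commute)
    then show False using ng cong_sym by blast
  qed
qed

lemma S_prime:
  fixes q k :: nat
  assumes q: "prime q" and k: "k > 0"
  shows "[S k q = (if (q-1) dvd k then q-1 else 0)] (mod q)"
proof -
  have q1: "q > 0" using q prime_gt_0_nat by blast
  have "S k q = S k ((q-1) + 1)" using q1 by simp
  also have "\<dots> = S k (q-1) + (q-1+1)^k" by (simp only: S_split) simp
  also have "\<dots> = (\<Sum>i=1..q-1. i^k) + q^k" using q1 by (simp add: S_def)
  finally have e: "S k q = (\<Sum>i=1..q-1. i^k) + q^k" .
  have "[q^k = 0] (mod q)" using k by (simp add: cong_0_iff)
  show ?thesis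
  proof (cases "(q-1) dvd k")
    case True
    then show ?thesis using e cong_add[OF S_prime_dvd[OF q True] \<open>[q^k = 0] (mod q)\<close>] by simp
  next
    case False
    then show ?thesis using e cong_add[OF S_prime_ndvd[OF q False] \<open>[q^k = 0] (mod q)\<close>] by simp
  qed
qed

lemma KQ:
  fixes q n :: nat
  assumes q: "prime q" and d: "q dvd n" and n: "n > 0"
  shows "[S n n = (n div q) * (if (q-1) dvd n then q-1 else 0)] (mod q)"
proof -
  have "n = q * (n div q)" using d by simp
  then have "[S n n = (n div q) * S n q] (mod q)" using S_block_mod[of n q "n div q"] by simp
  moreover have "[(n div q) * S n q = (n div q) * (if (q-1) dvd n then q-1 else 0)] (mod q)"
    by (rule cong_scalar_left) (rule S_prime[OF q n])
  ultimately show ?thesis by (rule cong_trans)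
qed

lemma KP2:
  fixes p n :: nat
  assumes p: "prime p" and d: "p^2 dvd n"
  shows "[S n n = (n div p^2) * (p * S n p)] (mod p^2)"
proof -
  have "n = p^2 * (n div p^2)" using d by simp
  then have 1: "[S n n = (n div p^2) * S n (p^2)] (mod p^2)" using S_block_mod[of n "p^2" "n div p^2"] by simp
  have "p dvd p^2" by simp
  then have "p dvd n" using d by (rule dvd_trans)
  then have "[S n (p*p) = p * S n p] (mod p^2)"
    by (rule S_block[OF lift_k[OF p]])
  then have "[(n div p^2) * S n (p^2) = (n div p^2) * (p * S n p)] (mod p^2)"
    unfolding power2_eq_square by (rule cong_scalar_left)
  with 1 show ?thesis by (rule cong_trans)
qed

lemma cong_scale:
  fixes a b c m :: nat
  assumes "[a = b] (mod m)"
  shows "[c*a = c*b] (mod c*m)"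
  using assms unfolding cong_def mod_mult_mult1 by simp

lemma cong_unscale:
  fixes a b c m :: nat
  assumes "[c*a = c*b] (mod c*m)" "c > 0"
  shows "[a = b] (mod m)"
  using assms unfolding cong_def mod_mult_mult1 by simp

lemma prod_cong:
  fixes Q :: "nat set"
  assumes "finite Q" "\<forall>q\<in>Q. prime q" "\<forall>q\<in>Q. [x = y] (mod q)"
  shows "[x = y] (mod (\<Prod>q\<in>Q. q))"
  using assms
proof (induction Q rule: finite_induct)
  case empty then show ?case by simp
next
  case (insert q F)
  have "coprime q (\<Prod>r\<in>F. r)"
  proof (rule prime_imp_coprime)
    show "prime q" using insert by simp
    show "\<not> q dvd (\<Prod>r\<in>F. r)"
    proof
      assume "q dvd (\<Prod>r\<in>F. r)"
      then obtain r where "r \<in> F" "q dvd r" using insert prime_dvd_prod_iff[of F q "\<lambda>r. r"]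
        by auto
      then have "q = r" using insert by (metis insert_iff primes_dvd_imp_eq)
      then show False using \<open>r \<in> F\<close> insert by simp
    qed
  qed
  then show ?case using insert coprime_cong_mult_nat by simp
qed

lemma coprime_prime_prod:
  fixes Q :: "nat set"
  assumes "finite Q" "\<forall>r\<in>Q. prime r" "prime q" "q \<notin> Q"
  shows "coprime q (\<Prod>r\<in>Q. r)"
proof (rule prime_imp_coprime)
  show "prime q" using assms by simp
  show "\<not> q dvd (\<Prod>r\<in>Q. r)"
  proof
    assume "q dvd (\<Prod>r\<in>Q. r)"
    then obtain r where "r \<in> Q" "q dvd r" using assms prime_dvd_prod_iff[of Q q "\<lambda>r. r"]
      by auto
    then have "q = r" using assms by (metis primes_dvd_imp_eq)
    then show False using \<open>r \<in> Q\<close> assms by simp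
  qed
qed

lemma sq_not_dvd_self:
  fixes p :: nat
  assumes "prime p" "p^2 dvd p"
  shows False
proof -
  have "p > 1" using assms prime_gt_1_nat by blast
  then have "p < p^2" by (simp add: power2_eq_square)
  moreover have "p^2 \<le> p" using assms(2) \<open>p > 1\<close> by (intro dvd_imp_le) auto
  ultimately show False by linarith
qed

lemma aux_cancel:
  fixes A q c :: nat
  assumes "q > 0"
  shows "[A*(q-1) = c] (mod q) \<longleftrightarrow> [A + c = 0] (mod q)"
proof -
  have e: "A*(q-1) + A = A*q" using assms
    by (metis Suc_diff_1 mult_Suc_right add.commute)
  have z: "[A*q = 0] (mod q)" by (simp add: cong_0_iff)
  have "[A*(q-1) = c] (mod q) \<longleftrightarrow> [A*(q-1) + A = c + A] (mod q)"
    by (simp add: cong_add_rcancel_nat)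
  also have "\<dots> \<longleftrightarrow> [0 = c + A] (mod q)"
    using e z by (metis cong_sym cong_trans)
  also have "\<dots> \<longleftrightarrow> [A + c = 0] (mod q)"
    by (simp add: cong_sym_eq add.commute)
  finally show ?thesis .
qed

theorem theorem1:
  fixes p n :: nat
  assumes "prime p" and "n > 0"
  shows "n \<in> M (int p) \<longleftrightarrow>
    (\<exists>s (Q :: nat set).
       s \<le> 2 \<and> finite Q \<and> (\<forall>q\<in>Q. prime q \<and> q \<noteq> p) \<and>
       n = p ^ s * (\<Prod>q\<in>Q. q) \<and>
       (\<forall>q\<in>Q. (q - 1) dvd n \<and> [n div q + p = 0] (mod q)) \<and>
       (s = 1 \<longrightarrow> \<not> (p - 1) dvd n) \<and>
       (s = 2 \<longrightarrow> (p - 1) dvd n \<and> [n div p ^ 2 + 1 = 0] (mod p)))"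
proof -
  note p = assms(1) and n = assms(2)
  have p1: "p > 1" using p prime_gt_1_nat by blast
  have Mi: "n \<in> M (int p) \<longleftrightarrow> [S n n = p] (mod n)"
    using n by (simp add: M_def cong_int_iff)
  have P2: "[S n n = (n div p^2) * (p * (if (p-1) dvd n then p-1 else 0))] (mod p^2)"
    if "p^2 dvd n"
  proof -
    have "[S n p = (if (p-1) dvd n then p-1 else 0)] (mod p)" by (rule S_prime[OF p n])
    then have "[p * S n p = p * (if (p-1) dvd n then p-1 else 0)] (mod p*p)" by (rule cong_scale)
    then have "[(n div p^2) * (p * S n p) = (n div p^2) * (p * (if (p-1) dvd n then p-1 else 0))] (mod p^2)"
      unfolding power2_eq_square by (rule cong_scalar_left)
    with KP2[OF p that] show ?thesis by (rule cong_trans)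
  qed
  show ?thesis
  proof
    assume "n \<in> M (int p)"
    then have T: "[S n n = p] (mod n)" using Mi by simp
    define s where "s = multiplicity p n"
    define Q where "Q = prime_factors n - {p}"
    have nu: "\<not> is_unit p" using p1 by simp
    have Qprop: "prime q \<and> q \<noteq> p \<and> (q - 1) dvd n \<and> [n div q + p = 0] (mod q) \<and> multiplicity q n = 1"
      if qQ: "q \<in> Q" for q
    proof -
      have q: "prime q" "q dvd n" "q \<noteq> p" using qQ n by (auto simp: Q_def in_prime_factors_iff)
      have q0: "q > 0" using q prime_gt_0_nat by blast
      have Tq: "[S n n = p] (mod q)" using T q(2) cong_dvd_modulus_nat by blast
      have K: "[S n n = (n div q) * (if (q-1) dvd n then q-1 else 0)] (mod q)" by (rule KQ[OF q(1,2) n])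
      have np0: "\<not> [p = 0] (mod q)"
      proof
        assume "[p = 0] (mod q)"
        then have "q dvd p" by (simp add: cong_0_iff)
        then show False using q p primes_dvd_imp_eq by blast
      qed
      have dv: "(q-1) dvd n"
      proof (rule ccontr)
        assume "\<not> (q-1) dvd n"
        then have "[S n n = 0] (mod q)" using K by simp
        then show False using cong_trans[OF cong_sym[OF Tq]] np0 by blast
      qed
      then have K': "[S n n = (n div q) * (q-1)] (mod q)" using K by simp
      have c1: "[(n div q) * (q-1) = p] (mod q)" using cong_trans[OF cong_sym[OF K'] Tq] .
      then have c2: "[n div q + p = 0] (mod q)" using aux_cancel[OF q0] by blast
      have "\<not> q^2 dvd n"
      proof
        assume "q^2 dvd n"
        then obtain c where "n = q*q*c" by (auto simp: power2_eq_square)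
        then have "n div q = q*c" using q0 by simp
        then have "[(n div q) * (q-1) = 0] (mod q)" by (simp add: cong_0_iff)
        then show False using cong_trans[OF cong_sym[OF c1]] np0 by blast
      qed
      moreover have "1 \<le> multiplicity q n"
        using q(2) power_dvd_iff_le_multiplicity[of n q 1] n q(1) prime_gt_1_nat[of q] by simp
      ultimately have "multiplicity q n = 1"
        using power_dvd_iff_le_multiplicity[of n q 2] n q(1) prime_gt_1_nat[of q] by simp
      then show ?thesis using q dv c2 by simp
    qed
    have no3: "\<not> p^3 dvd n"
    proof
      assume "p^3 dvd n"
      then obtain c where c: "n = p^2*(p*c)" by (metis dvdE power3_eq_cube power2_eq_square mult.assoc)
      then have d2: "p^2 dvd n" by simp
      have "n div p^2 = p*c" using c p1 by simp
      then have "[(n div p^2) * (p * (if (p-1) dvd n then p-1 else 0)) = 0] (mod p^2)"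
        by (simp add: cong_0_iff power2_eq_square)
      then have "[S n n = 0] (mod p^2)" using P2[OF d2] cong_trans by blast
      moreover have "[S n n = p] (mod p^2)" using T d2 cong_dvd_modulus_nat by blast
      ultimately have "[p = 0] (mod p^2)" using cong_trans cong_sym by blast
      then show False using sq_not_dvd_self[OF p] by (simp add: cong_0_iff)
    qed
    have s2: "s \<le> 2"
    proof (rule ccontr)
      assume "\<not> s \<le> 2"
      then have "3 \<le> multiplicity p n" by (simp add: s_def)
      then show False using no3 multiplicity_dvd' by blast
    qed
    have s1: "\<not> (p - 1) dvd n" if "s = 1"
    proof
      assume dv: "(p-1) dvd n"
      have pd: "p dvd n" using that multiplicity_dvd'[of 1 p n] by (simp add: s_def)
      have np2: "\<not> p^2 dvd n" using that power_dvd_iff_le_multiplicity[of n p 2] n nu by (simp add: s_def)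
      have "[S n n = (n div p) * (p-1)] (mod p)" using KQ[OF p pd n] dv by simp
      moreover have "[S n n = p] (mod p)" using T pd cong_dvd_modulus_nat by blast
      moreover have "[p = 0] (mod p)" by (simp add: cong_0_iff)
      ultimately have "[(n div p) * (p-1) = 0] (mod p)" using cong_trans cong_sym by blast
      then have "p dvd (n div p) * (p-1)" by (simp add: cong_0_iff)
      then have "p dvd n div p \<or> p dvd p - 1" using p prime_dvd_mult_iff by blast
      moreover have "\<not> p dvd p - 1" using p1 by (auto dest: dvd_imp_le)
      moreover have "\<not> p dvd n div p"
      proof
        assume "p dvd n div p"
        then obtain c where "n div p = p*c" by blast
        then have "n = p^2*c" using pd by (metis dvd_mult_div_cancel mult.assoc power2_eq_square)
        then show False using np2 by simp
      qed
      ultimately show False by blast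
    qed
    have s2c: "(p - 1) dvd n \<and> [n div p ^ 2 + 1 = 0] (mod p)" if "s = 2"
    proof -
      have d2: "p^2 dvd n" using that multiplicity_dvd'[of 2 p n] by (simp add: s_def)
      have T2: "[S n n = p] (mod p^2)" using T d2 cong_dvd_modulus_nat by blast
      have dv: "(p-1) dvd n"
      proof (rule ccontr)
        assume "\<not> (p-1) dvd n"
        then have "[S n n = 0] (mod p^2)" using P2[OF d2] by simp
        then have "[p = 0] (mod p^2)" using T2 cong_trans cong_sym by blast
        then show False using sq_not_dvd_self[OF p] by (simp add: cong_0_iff)
      qed
      have "[S n n = (n div p^2) * (p * (p-1))] (mod p^2)" using P2[OF d2] dv by simp
      then have "[(n div p^2) * (p * (p-1)) = p] (mod p^2)" using T2 cong_trans cong_sym by blast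
      then have "[p * ((n div p^2) * (p-1)) = p * 1] (mod p * p)"
        by (simp add: power2_eq_square mult.commute mult.left_commute)
      then have "[(n div p^2) * (p-1) = 1] (mod p)" using cong_unscale p1 by simp
      then have "[n div p^2 + 1 = 0] (mod p)" using aux_cancel p1 by simp
      then show ?thesis using dv by simp
    qed
    have fQ: "finite Q" by (simp add: Q_def)
    have nprod: "n = p ^ s * (\<Prod>q\<in>Q. q)"
    proof -
      have "n = (\<Prod>r\<in>prime_factors n. r ^ multiplicity r n)"
        using prod_prime_factors[of n] n by simp
      also have "\<dots> = p ^ s * (\<Prod>q\<in>Q. q)"
      proof (cases "p \<in> prime_factors n")
        case True
        then have "(\<Prod>r\<in>prime_factors n. r ^ multiplicity r n) = p ^ s * (\<Prod>r\<in>Q. r ^ multiplicity r n)"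
          by (simp add: Q_def s_def prod.remove)
        also have "(\<Prod>r\<in>Q. r ^ multiplicity r n) = (\<Prod>r\<in>Q. r)"
          using Qprop by (intro prod.cong) auto
        finally show ?thesis .
      next
        case False
        then have "\<not> p dvd n" using p n by (simp add: in_prime_factors_iff)
        then have "s = 0" by (simp add: s_def not_dvd_imp_multiplicity_0)
        moreover have "Q = prime_factors n" using False by (auto simp: Q_def)
        ultimately show ?thesis
          using Qprop by (auto intro!: prod.cong)
      qed
      finally show ?thesis .
    qed
    show "\<exists>s (Q :: nat set).
       s \<le> 2 \<and> finite Q \<and> (\<forall>q\<in>Q. prime q \<and> q \<noteq> p) \<and>
       n = p ^ s * (\<Prod>q\<in>Q. q) \<and>
       (\<forall>q\<in>Q. (q - 1) dvd n \<and> [n div q + p = 0] (mod q)) \<and>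
       (s = 1 \<longrightarrow> \<not> (p - 1) dvd n) \<and>
       (s = 2 \<longrightarrow> (p - 1) dvd n \<and> [n div p ^ 2 + 1 = 0] (mod p))"
      using s2 fQ Qprop nprod s1 s2c by blast
  next
    assume "\<exists>s (Q :: nat set).
       s \<le> 2 \<and> finite Q \<and> (\<forall>q\<in>Q. prime q \<and> q \<noteq> p) \<and>
       n = p ^ s * (\<Prod>q\<in>Q. q) \<and>
       (\<forall>q\<in>Q. (q - 1) dvd n \<and> [n div q + p = 0] (mod q)) \<and>
       (s = 1 \<longrightarrow> \<not> (p - 1) dvd n) \<and>
       (s = 2 \<longrightarrow> (p - 1) dvd n \<and> [n div p ^ 2 + 1 = 0] (mod p))"
    then obtain s Q where s2: "s \<le> 2" and fQ: "finite Q" and Qp: "\<forall>q\<in>Q. prime q \<and> q \<noteq> p"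
      and nd: "n = p ^ s * (\<Prod>q\<in>Q. q)"
      and Qc: "\<forall>q\<in>Q. (q - 1) dvd n \<and> [n div q + p = 0] (mod q)"
      and c1: "s = 1 \<longrightarrow> \<not> (p - 1) dvd n"
      and c2: "s = 2 \<longrightarrow> (p - 1) dvd n \<and> [n div p ^ 2 + 1 = 0] (mod p)"
      by blast
    have Tp: "[S n n = p] (mod p^s)"
    proof -
      consider "s = 0" | "s = 1" | "s = 2" using s2 by linarith
      then show ?thesis
      proof cases
        case 1 then show ?thesis by simp
      next
        case 2
        have pd: "p dvd n" using nd 2 by simp
        have "[S n n = 0] (mod p)" using KQ[OF p pd n] c1 2 by simp
        moreover have "[p = 0] (mod p)" by (simp add: cong_0_iff)
        ultimately have "[S n n = p] (mod p)" by (metis cong_sym cong_trans)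
        then show ?thesis using 2 by simp
      next
        case 3
        have d2: "p^2 dvd n" using nd 3 by simp
        have dv: "(p-1) dvd n" and B: "[n div p ^ 2 + 1 = 0] (mod p)" using c2 3 by auto
        have "[(n div p^2) * (p-1) = 1] (mod p)" using B aux_cancel p1 by simp
        then have "[p * ((n div p^2) * (p-1)) = p * 1] (mod p * p)" by (rule cong_scale)
        then have "[(n div p^2) * (p * (p-1)) = p] (mod p^2)"
          by (simp add: power2_eq_square mult.commute mult.left_commute)
        moreover have "[S n n = (n div p^2) * (p * (p-1))] (mod p^2)" using P2[OF d2] dv by simp
        ultimately show ?thesis using 3 cong_trans by blast
      qed
    qed
    have TQ: "[S n n = p] (mod (\<Prod>q\<in>Q. q))"
    proof (rule prod_cong[OF fQ])
      show "\<forall>q\<in>Q. prime q" using Qp by simp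
      show "\<forall>q\<in>Q. [S n n = p] (mod q)"
      proof
        fix q assume qQ: "q \<in> Q"
        have q: "prime q" using Qp qQ by simp
        have q0: "q > 0" using q prime_gt_0_nat by blast
        have "q dvd (\<Prod>q\<in>Q. q)" using dvd_prodI[OF fQ qQ, of "\<lambda>q. q"] by simp
        then have qd: "q dvd n" using nd by (metis dvd_mult)
        have dv: "(q-1) dvd n" and C: "[n div q + p = 0] (mod q)" using Qc qQ by auto
        have "[(n div q) * (q-1) = p] (mod q)" using aux_cancel[OF q0] C by blast
        moreover have "[S n n = (n div q) * (q-1)] (mod q)" using KQ[OF q qd n] dv by simp
        ultimately show "[S n n = p] (mod q)" using cong_trans by blast
      qed
    qed
    have "coprime p (\<Prod>q\<in>Q. q)"
      using coprime_prime_prod[OF fQ _ p] Qp by auto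
    then have "coprime (p^s) (\<Prod>q\<in>Q. q)" by simp
    then have "[S n n = p] (mod (p^s * (\<Prod>q\<in>Q. q)))" using Tp TQ coprime_cong_mult_nat by blast
    then have "[S n n = p] (mod n)" by (simp only: nd[symmetric])
    then show "n \<in> M (int p)" using Mi by simp
  qed
qed

end
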